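(* Let $(M,\theta)$ be a strictly pseudoconvex CR manifold and let $f=(F_1,\dots,F_m,\alpha):M\to\mathbb H^m\simeq\mathbb C^m\times\mathbb R$ be a $C^2$ map such that $df(H(M))\subset H(\mathbb H^m)$. Write $\varphi_j=\mathrm{Re}\,F_j$, $\psi_j=\mathrm{Im}\,F_j$. Then $$H_b(f)=\sum_{j=1}^m\big(\Delta_b\varphi_j\,X_j+\Delta_b\psi_j\,Y_j\big).$$ In particular $H_b(f)$ is horizontal and $|H_b(f)|^2_{\mathbb H^m}=4\sum_{j=1}^m\big((\Delta_b\varphi_j)^2+(\Delta_b\psi_j)^2\big)$.
   Context: Strictly pseudoconvex CR manifold $(M,\theta)$ of CR dimension $n$: orientable $(2n+1)$-manifold with rank-$2n$ subbundle $H(M)$ carrying an integrable complex structure $J$, and a 1-form $\theta$ with $\ker\theta=H(M)$ and positive definite Levi form $G_\theta(X,Y)=-d\theta(JX,Y)$ on $H(M)$. Reeb field $\xi$: $\theta(\xi)=1$, $\xi\rfloor d\theta=0$. Tanaka–Webster connection $\nabla$: unique affine connection with $\nabla\theta=0,\nabla d\theta=0,\nabla J=0$, torsion $T_\nabla(X,Y)=-\theta([X,Y])\xi$, $T_\nabla(\xi,JX)=-JT_\nabla(\xi,X)\in H(M)$ for $X,Y\in H(M)$. Sub-Laplacian $\Delta_bu=\sum_{i=1}^{2n}(X_i(X_iu)-(\nabla_{X_i}X_i)u)$ for a local $G_\theta$-orthonormal frame $(X_i)$ of $H(M)$. Heisenberg group $\mathbb H^m=\mathbb C^m\times\mathbb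 R$ with law $(z,t)(w,s)=(z+w,t+s+2\mathrm{Im}\sum z^j\bar w^j)$; left-invariant fields $X_j=\partial_{x_j}+2y_j\partial_t$, $Y_j=\partial_{y_j}-2x_j\partial_t$, $T=\partial_t$; $H(\mathbb H^m)=\mathrm{span}\{X_j,Y_j\}$; $g_{\mathbb H^m}$ is the Riemannian metric with $X_j,Y_j,T$ orthogonal, $|X_j|^2=|Y_j|^2=4$, $|T|=1$. The Levi tension of $f:M\to(\mathbb H^m,g_{\mathbb H^m})$ is $H_b(f)=\sum_i\big(\nabla^f_{X_i}df(X_i)-df(\nabla_{X_i}X_i)\big)$, $\nabla^f$ the pullback of the Levi-Civita connection of $g_{\mathbb H^m}$. *)

theory Defs
  imports "HOL-Analysis.Analysis"
begin

fun Ck :: "nat \<Rightarrow> 'a::euclidean_space set \<Rightarrow> ('a \<Rightarrow> 'b::real_normed_vector) \<Rightarrow> bool" where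
  "Ck 0 U f = continuous_on U f"
| "Ck (Suc k) U f = (f differentiable_on U \<and>
      (\<forall>v. Ck k U (\<lambda>x. frechet_derivative f (at x) v)))"

definition smooth_on :: "'a::euclidean_space set \<Rightarrow> ('a \<Rightarrow> 'b::real_normed_vector) \<Rightarrow> bool" where
  "smooth_on U f = (\<forall>k. Ck k U f)"

definition bracket :: "('a::euclidean_space \<Rightarrow> 'a) \<Rightarrow> ('a \<Rightarrow> 'a) \<Rightarrow> 'a \<Rightarrow> 'a" where
  "bracket X Y x = frechet_derivative Y (at x) (X x) - frechet_derivative X (at x) (Y x)"

definition cov :: "('a::euclidean_space \<Rightarrow> 'a \<Rightarrow> 'a \<Rightarrow> 'a) \<Rightarrow> ('a \<Rightarrow> 'a) \<Rightarrow> ('a \<Rightarrow> 'a) \<Rightarrow> 'a \<Rightarrow> 'a" where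
  "cov Gam X Y x = frechet_derivative Y (at x) (X x) + Gam x (X x) (Y x)"

definition torsion :: "('a::euclidean_space \<Rightarrow> 'a \<Rightarrow> 'a \<Rightarrow> 'a) \<Rightarrow> ('a \<Rightarrow> 'a) \<Rightarrow> ('a \<Rightarrow> 'a) \<Rightarrow> 'a \<Rightarrow> 'a" where
  "torsion Gam X Y x = cov Gam X Y x - cov Gam Y X x - bracket X Y x"

text \<open>Exterior derivative of a 1-form th (th x is the covector at x), evaluated on
  tangent vectors v w at x; convention d th(X,Y) = X(th Y) - Y(th X) - th([X,Y]).\<close>
definition dform :: "('a::euclidean_space \<Rightarrow> 'a \<Rightarrow> real) \<Rightarrow> 'a \<Rightarrow> 'a \<Rightarrow> 'a \<Rightarrow> real" where
  "dform th x v w = frechet_derivative (\<lambda>q. th q w) (at x) v - frechet_derivative (\<lambda>q. th q v) (at x) w"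

definition horiz :: "('a::euclidean_space \<Rightarrow> 'a \<Rightarrow> real) \<Rightarrow> 'a \<Rightarrow> 'a set" where
  "horiz th x = {v. th x v = 0}"

definition levi_form :: "('a::euclidean_space \<Rightarrow> 'a \<Rightarrow> real) \<Rightarrow> ('a \<Rightarrow> 'a \<Rightarrow> 'a) \<Rightarrow> 'a \<Rightarrow> 'a \<Rightarrow> 'a \<Rightarrow> real" where
  "levi_form th J x v w = - dform th x (J x v) w"

definition vfields :: "'a::euclidean_space set \<Rightarrow> ('a \<Rightarrow> 'a) set" where
  "vfields U = {X. smooth_on U X}"

definition hfields :: "'a::euclidean_space set \<Rightarrow> ('a \<Rightarrow> 'a \<Rightarrow> real) \<Rightarrow> ('a \<Rightarrow> 'a) set" where
  "hfields U th = {X. smooth_on U X \<and> (\<forall>x\<in>U. X x \<in> horiz th x)}"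

section \<open>Strictly pseudoconvex CR structure (local model on an open U, dim 2n+1)\<close>

text \<open>J is the complex structure on H, extended to TM by J xi = 0 (standard convention,
  needed to state nabla J = 0); xi is the Reeb field.\<close>
definition spc_CR ::
  "'a::euclidean_space set \<Rightarrow> nat \<Rightarrow> ('a \<Rightarrow> 'a \<Rightarrow> real) \<Rightarrow> ('a \<Rightarrow> 'a \<Rightarrow> 'a) \<Rightarrow> ('a \<Rightarrow> 'a) \<Rightarrow> bool" where
  "spc_CR U n th J xi \<longleftrightarrow>
     open U \<and> DIM('a) = 2 * n + 1 \<and>
     (\<forall>x\<in>U. linear (th x) \<and> th x \<noteq> (\<lambda>v. 0)) \<and>
     (\<forall>v. smooth_on U (\<lambda>x. th x v)) \<and>
     (\<forall>x\<in>U. linear (J x) \<and> J x (xi x) = 0 \<and>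
        (\<forall>v\<in>horiz th x. J x v \<in> horiz th x \<and> J x (J x v) = - v)) \<and>
     (\<forall>v. smooth_on U (\<lambda>x. J x v)) \<and>
     (\<forall>X\<in>hfields U th. \<forall>Y\<in>hfields U th. \<forall>x\<in>U.
        let JX = (\<lambda>q. J q (X q)); JY = (\<lambda>q. J q (Y q)) in
        bracket JX Y x + bracket X JY x \<in> horiz th x \<and>
        bracket JX JY x - bracket X Y x - J x (bracket X JY x) - J x (bracket JX Y x) = 0) \<and>
     (\<forall>x\<in>U. \<forall>v\<in>horiz th x. v \<noteq> 0 \<longrightarrow> levi_form th J x v v > 0) \<and>
     smooth_on U xi \<and>
     (\<forall>x\<in>U. th x (xi x) = 1 \<and> (\<forall>w. dform th x (xi x) w = 0))"

text \<open>Tanaka-Webster connection (characterised by its defining properties).\<close>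
definition tanaka_webster ::
  "'a::euclidean_space set \<Rightarrow> ('a \<Rightarrow> 'a \<Rightarrow> real) \<Rightarrow> ('a \<Rightarrow> 'a \<Rightarrow> 'a) \<Rightarrow> ('a \<Rightarrow> 'a)
    \<Rightarrow> ('a \<Rightarrow> 'a \<Rightarrow> 'a \<Rightarrow> 'a) \<Rightarrow> bool" where
  "tanaka_webster U th J xi Gam \<longleftrightarrow>
     (\<forall>x\<in>U. \<forall>v. linear (Gam x v) \<and> linear (\<lambda>u. Gam x u v)) \<and>
     (\<forall>u v. smooth_on U (\<lambda>x. Gam x u v)) \<and>
     (\<forall>X\<in>vfields U. \<forall>Y\<in>vfields U. \<forall>x\<in>U.
        frechet_derivative (\<lambda>q. th q (Y q)) (at x) (X x) = th x (cov Gam X Y x) \<and>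
        (\<forall>Z\<in>vfields U. frechet_derivative (\<lambda>q. dform th q (Y q) (Z q)) (at x) (X x)
            = dform th x (cov Gam X Y x) (Z x) + dform th x (Y x) (cov Gam X Z x)) \<and>
        cov Gam X (\<lambda>q. J q (Y q)) x = J x (cov Gam X Y x)) \<and>
     (\<forall>X\<in>hfields U th. \<forall>Y\<in>hfields U th. \<forall>x\<in>U.
        torsion Gam X Y x = - (th x (bracket X Y x)) *\<^sub>R xi x) \<and>
     (\<forall>X\<in>hfields U th. \<forall>x\<in>U.
        torsion Gam xi (\<lambda>q. J q (X q)) x = - J x (torsion Gam xi X x) \<and>
        torsion Gam xi X x \<in> horiz th x)"

definition ortho_frame ::
  "'a::euclidean_space set \<Rightarrow> nat \<Rightarrow> ('a \<Rightarrow> 'a \<Rightarrow> real) \<Rightarrow> ('a \<Rightarrow> 'a \<Rightarrow> 'a) \<Rightarrow> (nat \<Rightarrow> 'a \<Rightarrow> 'a) \<Rightarrow> bool" where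
  "ortho_frame U n th J X \<longleftrightarrow>
     (\<forall>i<2*n. X i \<in> hfields U th) \<and>
     (\<forall>x\<in>U. \<forall>i<2*n. \<forall>j<2*n. levi_form th J x (X i x) (X j x) = (if i = j then 1 else 0))"

definition sublap ::
  "nat \<Rightarrow> ('a::euclidean_space \<Rightarrow> 'a \<Rightarrow> 'a \<Rightarrow> 'a) \<Rightarrow> (nat \<Rightarrow> 'a \<Rightarrow> 'a) \<Rightarrow> ('a \<Rightarrow> real) \<Rightarrow> 'a \<Rightarrow> real" where
  "sublap n Gam X u x =
     (\<Sum>i<2*n. frechet_derivative (\<lambda>q. frechet_derivative u (at q) (X i q)) (at x) (X i x)
               - frechet_derivative u (at x) (cov Gam (X i) (X i) x))"

section \<open>The Heisenberg group H^m = C^m x R (m = CARD('m))\<close>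

definition heisX :: "'m::finite \<Rightarrow> ((complex^'m) \<times> real) \<Rightarrow> ((complex^'m) \<times> real)" where
  "heisX j p = (axis j 1, 2 * Im (fst p $ j))"

definition heisY :: "'m::finite \<Rightarrow> ((complex^'m) \<times> real) \<Rightarrow> ((complex^'m) \<times> real)" where
  "heisY j p = (axis j \<i>, - 2 * Re (fst p $ j))"

definition heisT :: "(complex^'m::finite) \<times> real" where
  "heisT = (0, 1)"

definition heisH :: "((complex^'m::finite) \<times> real) \<Rightarrow> ((complex^'m) \<times> real) set" where
  "heisH p = span (range (\<lambda>j. heisX j p) \<union> range (\<lambda>j. heisY j p))"

text \<open>The Riemannian metric g_{H^m}: X_j, Y_j, T orthogonal, |X_j|^2=|Y_j|^2=4, |T|=1.
  For v = sum a_j X_j + b_j Y_j + c T one has a_j = Re v_j, b_j = Im v_j and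
  c = v_t - sum_j 2 (y_j a_j - x_j b_j).\<close>
definition heis_vcomp :: "((complex^'m::finite) \<times> real) \<Rightarrow> ((complex^'m) \<times> real) \<Rightarrow> real" where
  "heis_vcomp p v = snd v - (\<Sum>j\<in>UNIV. 2 * (Im (fst p $ j) * Re (fst v $ j) - Re (fst p $ j) * Im (fst v $ j)))"

definition heis_g :: "((complex^'m::finite) \<times> real) \<Rightarrow> ((complex^'m) \<times> real) \<Rightarrow> ((complex^'m) \<times> real) \<Rightarrow> real" where
  "heis_g p v w = (\<Sum>j\<in>UNIV. 4 * (Re (fst v $ j) * Re (fst w $ j) + Im (fst v $ j) * Im (fst w $ j)))
                  + heis_vcomp p v * heis_vcomp p w"

text \<open>Christoffel tensor (in global coordinates) of the Levi-Civita connection of a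
  Riemannian metric g, via the Koszul formula on coordinate fields.\<close>
definition LC_Gamma :: "('b::euclidean_space \<Rightarrow> 'b \<Rightarrow> 'b \<Rightarrow> real) \<Rightarrow> 'b \<Rightarrow> 'b \<Rightarrow> 'b \<Rightarrow> 'b" where
  "LC_Gamma g p v w = (THE u. \<forall>z. 2 * g p u z =
       frechet_derivative (\<lambda>q. g q w z) (at p) v + frechet_derivative (\<lambda>q. g q v z) (at p) w
     - frechet_derivative (\<lambda>q. g q v w) (at p) z)"

text \<open>Levi tension H_b(f) = sum_i (nabla^f_{X_i} df(X_i) - df(nabla_{X_i} X_i)),
  nabla^f the pullback of the Levi-Civita connection of g_{H^m}.\<close>
definition levi_tension ::
  "nat \<Rightarrow> ('a::euclidean_space \<Rightarrow> 'a \<Rightarrow> 'a \<Rightarrow> 'a) \<Rightarrow> (nat \<Rightarrow> 'a \<Rightarrow> 'a)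
     \<Rightarrow> ('a \<Rightarrow> (complex^'m::finite) \<times> real) \<Rightarrow> 'a \<Rightarrow> (complex^'m) \<times> real" where
  "levi_tension n Gam X f x =
     (\<Sum>i<2*n. frechet_derivative (\<lambda>q. frechet_derivative f (at q) (X i q)) (at x) (X i x)
               + LC_Gamma heis_g (f x) (frechet_derivative f (at x) (X i x)) (frechet_derivative f (at x) (X i x))
               - frechet_derivative f (at x) (cov Gam (X i) (X i) x))"

end

theory Submission imports Defs begin
lemma has_derivative_vec_nth'[derivative_intros]:
  "(g has_derivative g') F \<Longrightarrow> ((\<lambda>x. g x $ j) has_derivative (\<lambda>x. g' x $ j)) F"
  using bounded_linear.has_derivative[OF bounded_linear_vec_nth] .

definition omg :: "((complex^'m::finite) \<times> real) \<Rightarrow> ((complex^'m) \<times> real) \<Rightarrow> real" where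
  "omg v w = (\<Sum>j\<in>UNIV. 2 * (Im (fst v $ j) * Re (fst w $ j) - Re (fst v $ j) * Im (fst w $ j)))"

lemma omg_self: "omg v v = 0"
  by (simp add: omg_def algebra_simps)

lemma vcomp_omg: "heis_vcomp p w = snd w - omg p w"
  by (simp add: heis_vcomp_def omg_def)

lemma linear_vcomp: "linear (heis_vcomp p)"
  by (rule linearI) (simp_all add: heis_vcomp_def sum_subtractf[symmetric] sum.distrib[symmetric]
       sum_distrib_left algebra_simps)

lemma vcomp_X: "heis_vcomp p (heisX j p) = 0"
proof -
  have "(\<Sum>k\<in>UNIV. 2 * (Im (fst p $ k) * Re (axis j (1::complex) $ k) - Re (fst p $ k) * Im (axis j (1::complex) $ k)))
     = (\<Sum>k\<in>UNIV. if k = j then 2 * Im (fst p $ j) else 0)"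
    by (rule sum.cong) (auto simp: axis_def)
  then show ?thesis by (simp add: heis_vcomp_def heisX_def)
qed

lemma vcomp_Y: "heis_vcomp p (heisY j p) = 0"
proof -
  have "(\<Sum>k\<in>UNIV. 2 * (Im (fst p $ k) * Re (axis j \<i> $ k) - Re (fst p $ k) * Im (axis j \<i> $ k)))
     = (\<Sum>k\<in>UNIV. if k = j then - 2 * Re (fst p $ j) else 0)"
    by (rule sum.cong) (auto simp: axis_def)
  then show ?thesis by (simp add: heis_vcomp_def heisY_def)
qed

lemma heisH_vcomp: "v \<in> heisH p \<Longrightarrow> heis_vcomp p v = 0"
proof -
  assume v: "v \<in> heisH p"
  have "heisH p \<subseteq> {v. heis_vcomp p v = 0}"
    unfolding heisH_def
    by (rule span_minimal) (auto simp: vcomp_X vcomp_Y intro: real_vector.linear_subspace_kernel[OF linear_vcomp])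
  with v show ?thesis by auto
qed

lemma vcomp_decomp:
  assumes "heis_vcomp p w = 0"
  shows "w = (\<Sum>j\<in>UNIV. Re (fst w $ j) *\<^sub>R heisX j p + Im (fst w $ j) *\<^sub>R heisY j p)"
proof (rule prod_eqI)
  show "fst w = fst (\<Sum>j\<in>UNIV. Re (fst w $ j) *\<^sub>R heisX j p + Im (fst w $ j) *\<^sub>R heisY j p)"
  proof (subst vec_eq_iff, rule allI)
    fix k
    have "fst (\<Sum>j\<in>UNIV. Re (fst w $ j) *\<^sub>R heisX j p + Im (fst w $ j) *\<^sub>R heisY j p) $ k
       = (\<Sum>j\<in>UNIV. if j = k then fst w $ k else 0)"
      unfolding fst_sum sum_component
      by (rule sum.cong) (auto simp: heisX_def heisY_def axis_def complex_eq_iff)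
    then show "fst w $ k = fst (\<Sum>j\<in>UNIV. Re (fst w $ j) *\<^sub>R heisX j p + Im (fst w $ j) *\<^sub>R heisY j p) $ k"
      by simp
  qed
  show "snd w = snd (\<Sum>j\<in>UNIV. Re (fst w $ j) *\<^sub>R heisX j p + Im (fst w $ j) *\<^sub>R heisY j p)"
  proof -
    have "snd (\<Sum>j\<in>UNIV. Re (fst w $ j) *\<^sub>R heisX j p + Im (fst w $ j) *\<^sub>R heisY j p)
      = (\<Sum>j\<in>UNIV. 2 * (Im (fst p $ j) * Re (fst w $ j) - Re (fst p $ j) * Im (fst w $ j)))"
      unfolding snd_sum by (rule sum.cong) (auto simp: heisX_def heisY_def algebra_simps)
    then show ?thesis using assms by (simp add: heis_vcomp_def)
  qed
qed

lemma g_horiz: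
  assumes "heis_vcomp p w = 0"
  shows "heis_g p w w = 4 * (\<Sum>j\<in>UNIV. (Re (fst w $ j))\<^sup>2 + (Im (fst w $ j))\<^sup>2)"
  using assms by (simp add: heis_g_def power2_eq_square sum_distrib_left)

lemma vcomp_deriv:
  "((\<lambda>q. heis_vcomp q w) has_derivative (\<lambda>v. - omg v w)) (at p)"
  unfolding vcomp_omg omg_def
  by (auto intro!: derivative_eq_intros simp: sum_negf)

lemma g_deriv:
  "((\<lambda>q. heis_g q w z) has_derivative
     (\<lambda>v. heis_vcomp p w * (- omg v z) + (- omg v w) * heis_vcomp p z)) (at p)"
  unfolding heis_g_def
  by (auto intro!: derivative_eq_intros vcomp_deriv)

lemma g_pos_zero:
  assumes "heis_g p u u = 0" shows "u = 0"
proof -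
  let ?a = "\<lambda>j. 4 * (Re (fst u $ j) * Re (fst u $ j) + Im (fst u $ j) * Im (fst u $ j))"
  have nn: "\<And>j. 0 \<le> ?a j"
    by simp
  have s0: "0 \<le> sum ?a UNIV"
    by (rule sum_nonneg) (rule nn)
  have c0: "0 \<le> heis_vcomp p u * heis_vcomp p u" by simp
  have e: "sum ?a UNIV + heis_vcomp p u * heis_vcomp p u = 0"
    using assms unfolding heis_g_def .
  have s: "sum ?a UNIV = 0"
    using e s0 c0 by linarith
  have cc: "heis_vcomp p u * heis_vcomp p u = 0"
    using e s0 c0 by linarith
  from cc have c: "heis_vcomp p u = 0" by simp
  have "\<forall>j\<in>UNIV. ?a j = 0"
  proof -
    have h: "(sum ?a UNIV = 0) = (\<forall>j\<in>UNIV. ?a j = 0)"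
      by (rule sum_nonneg_eq_0_iff) (auto simp del: mult_eq_0_iff)
    show ?thesis using h s by blast
  qed
  then have "\<forall>j. Re (fst u $ j) = 0 \<and> Im (fst u $ j) = 0"
  proof (intro allI)
    fix j
    assume asm: "\<forall>j\<in>UNIV. ?a j = 0"
    have "?a j = 0" using bspec[OF asm UNIV_I] .
    then have "Re (fst u $ j) * Re (fst u $ j) + Im (fst u $ j) * Im (fst u $ j) = 0" by (simp only: mult_eq_0_iff) simp
    then show "Re (fst u $ j) = 0 \<and> Im (fst u $ j) = 0"
      by (simp only: sum_squares_eq_zero_iff)
  qed
  then have f: "fst u = 0"
    by (simp add: vec_eq_iff complex_eq_iff)
  with c have "snd u = 0" by (simp add: heis_vcomp_def)
  with f show ?thesis by (simp add: prod_eq_iff)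
qed

lemma g_zero: "heis_g p 0 z = 0"
  by (simp add: heis_g_def heis_vcomp_def)

lemma LC_zero:
  assumes "heis_vcomp p v = 0"
  shows "LC_Gamma heis_g p v v = 0"
  unfolding LC_Gamma_def
proof (rule the_equality)
  have D: "\<And>w z. frechet_derivative (\<lambda>q. heis_g q w z) (at p) =
     (\<lambda>v. heis_vcomp p w * (- omg v z) + (- omg v w) * heis_vcomp p z)"
    by (rule frechet_derivative_at[OF g_deriv, symmetric])
  show "\<forall>z. 2 * heis_g p 0 z =
       frechet_derivative (\<lambda>q. heis_g q v z) (at p) v + frechet_derivative (\<lambda>q. heis_g q v z) (at p) v
     - frechet_derivative (\<lambda>q. heis_g q v v) (at p) z"
    by (simp only: D assms omg_self g_zero) simp
  fix u assume "\<forall>z. 2 * heis_g p u z =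
       frechet_derivative (\<lambda>q. heis_g q v z) (at p) v + frechet_derivative (\<lambda>q. heis_g q v z) (at p) v
     - frechet_derivative (\<lambda>q. heis_g q v v) (at p) z"
  then have "2 * heis_g p u u =
       frechet_derivative (\<lambda>q. heis_g q v u) (at p) v + frechet_derivative (\<lambda>q. heis_g q v u) (at p) v
     - frechet_derivative (\<lambda>q. heis_g q v v) (at p) u" by (rule spec)
  then have "2 * heis_g p u u = 0" by (simp add: D assms omg_self)
  then show "u = 0" using g_pos_zero by simp
qed
lemma linear_expand:
  assumes "linear L" shows "L v = (\<Sum>b\<in>Basis. (v \<bullet> b) *\<^sub>R L b)"
proof -
  have "L v = L (\<Sum>b\<in>Basis. (v \<bullet> b) *\<^sub>R b)" unfolding euclidean_representation ..
  also have "\<dots> = (\<Sum>b\<in>Basis. (v \<bullet> b) *\<^sub>R L b)"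
    unfolding linear_sum[OF assms] linear_scale[OF assms] ..
  finally show ?thesis .
qed

lemma key:
  fixes f :: "'a::euclidean_space \<Rightarrow> (complex^'m::finite) \<times> real" and Y :: "'a \<Rightarrow> 'a"
  assumes U: "open U" "x \<in> U"
    and fd: "f differentiable_on U"
    and dfd: "\<forall>v. (\<lambda>q. frechet_derivative f (at q) v) differentiable_on U"
    and Yd: "Y differentiable_on U"
    and hor: "\<forall>q\<in>U. heis_vcomp (f q) (frechet_derivative f (at q) (Y q)) = 0"
  shows "heis_vcomp (f x) (frechet_derivative (\<lambda>q. frechet_derivative f (at q) (Y q)) (at x) (Y x)) = 0"
    and "\<And>j. frechet_derivative (\<lambda>q. frechet_derivative (\<lambda>q. Re (fst (f q) $ j)) (at q) (Y q)) (at x) (Y x)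
           = Re (fst (frechet_derivative (\<lambda>q. frechet_derivative f (at q) (Y q)) (at x) (Y x)) $ j)"
    and "\<And>j. frechet_derivative (\<lambda>q. frechet_derivative (\<lambda>q. Im (fst (f q) $ j)) (at q) (Y q)) (at x) (Y x)
           = Im (fst (frechet_derivative (\<lambda>q. frechet_derivative f (at q) (Y q)) (at x) (Y x)) $ j)"
proof -
  define G where "G = (\<lambda>q. frechet_derivative f (at q) (Y q))"
  define G' where "G' = (\<lambda>q. \<Sum>b\<in>Basis. (Y q \<bullet> b) *\<^sub>R frechet_derivative f (at q) b)"
  have fdq: "\<And>q. q \<in> U \<Longrightarrow> f differentiable at q"
    using fd U differentiable_on_eq_differentiable_at by blast
  have Fq: "\<And>q. q \<in> U \<Longrightarrow> (f has_derivative frechet_derivative f (at q)) (at q)"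
    using fdq frechet_derivative_works by blast
  have GG': "\<And>q. q \<in> U \<Longrightarrow> G' q = G q"
    unfolding G_def G'_def using linear_expand[OF linear_frechet_derivative[OF fdq]] by metis
  have "G' differentiable at x"
    unfolding G'_def
  proof (intro differentiable_sum ballI differentiable_scaleR differentiable_inner finite_Basis)
    fix b :: 'a
    show "Y differentiable at x" using Yd U differentiable_on_eq_differentiable_at by blast
    show "(\<lambda>q. b) differentiable at x" by simp
    show "(\<lambda>q. frechet_derivative f (at q) b) differentiable at x"
      using dfd U differentiable_on_eq_differentiable_at by blast
  qed
  then obtain L where L': "(G' has_derivative L) (at x)"
    unfolding differentiable_def by blast
  have GL: "(G has_derivative L) (at x)"
    by (rule has_derivative_transform_within_open[OF L' U]) (simp add: GG')
  then have FL: "frechet_derivative G (at x) = L" by (simp add: frechet_derivative_at[symmetric])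
  show "\<And>j. frechet_derivative (\<lambda>q. frechet_derivative (\<lambda>q. Re (fst (f q) $ j)) (at q) (Y q)) (at x) (Y x)
           = Re (fst (frechet_derivative (\<lambda>q. frechet_derivative f (at q) (Y q)) (at x) (Y x)) $ j)"
  proof -
    fix j
    have e: "\<And>q. q \<in> U \<Longrightarrow> Re (fst (G q) $ j) = frechet_derivative (\<lambda>q. Re (fst (f q) $ j)) (at q) (Y q)"
    proof -
      fix q assume q: "q \<in> U"
      have "((\<lambda>q. Re (fst (f q) $ j)) has_derivative (\<lambda>v. Re (fst (frechet_derivative f (at q) v) $ j))) (at q)"
        by (intro derivative_intros Fq q)
      then show "Re (fst (G q) $ j) = frechet_derivative (\<lambda>q. Re (fst (f q) $ j)) (at q) (Y q)"
        unfolding G_def by (simp add: frechet_derivative_at[symmetric])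
    qed
    have "((\<lambda>q. Re (fst (G q) $ j)) has_derivative (\<lambda>v. Re (fst (L v) $ j))) (at x)"
      by (intro derivative_intros GL)
    then have "((\<lambda>q. frechet_derivative (\<lambda>q. Re (fst (f q) $ j)) (at q) (Y q)) has_derivative (\<lambda>v. Re (fst (L v) $ j))) (at x)"
      by (rule has_derivative_transform_within_open[OF _ U]) (rule e)
    then show "?thesis j" using FL unfolding G_def by (simp add: frechet_derivative_at[symmetric])
  qed
  show "\<And>j. frechet_derivative (\<lambda>q. frechet_derivative (\<lambda>q. Im (fst (f q) $ j)) (at q) (Y q)) (at x) (Y x)
           = Im (fst (frechet_derivative (\<lambda>q. frechet_derivative f (at q) (Y q)) (at x) (Y x)) $ j)"
  proof -
    fix j
    have e: "\<And>q. q \<in> U \<Longrightarrow> Im (fst (G q) $ j) = frechet_derivative (\<lambda>q. Im (fst (f q) $ j)) (at q) (Y q)"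
    proof -
      fix q assume q: "q \<in> U"
      have "((\<lambda>q. Im (fst (f q) $ j)) has_derivative (\<lambda>v. Im (fst (frechet_derivative f (at q) v) $ j))) (at q)"
        by (intro derivative_intros Fq q)
      then show "Im (fst (G q) $ j) = frechet_derivative (\<lambda>q. Im (fst (f q) $ j)) (at q) (Y q)"
        unfolding G_def by (simp add: frechet_derivative_at[symmetric])
    qed
    have "((\<lambda>q. Im (fst (G q) $ j)) has_derivative (\<lambda>v. Im (fst (L v) $ j))) (at x)"
      by (intro derivative_intros GL)
    then have "((\<lambda>q. frechet_derivative (\<lambda>q. Im (fst (f q) $ j)) (at q) (Y q)) has_derivative (\<lambda>v. Im (fst (L v) $ j))) (at x)"
      by (rule has_derivative_transform_within_open[OF _ U]) (rule e)
    then show "?thesis j" using FL unfolding G_def by (simp add: frechet_derivative_at[symmetric])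
  qed
  define D where "D = frechet_derivative f (at x)"
  have Fx: "(f has_derivative D) (at x)" unfolding D_def using Fq U by blast
  define h' where "h' = (\<lambda>v. snd (L v) - (\<Sum>j\<in>UNIV. 2 * (
      (Im (fst (f x) $ j) * Re (fst (L v) $ j) + Im (fst (D v) $ j) * Re (fst (G x) $ j))
    - (Re (fst (f x) $ j) * Im (fst (L v) $ j) + Re (fst (D v) $ j) * Im (fst (G x) $ j)))))"
  have hd: "((\<lambda>q. heis_vcomp (f q) (G q)) has_derivative h') (at x)"
    unfolding heis_vcomp_def h'_def
    by (intro derivative_intros Fx GL)
  have hz: "((\<lambda>q. heis_vcomp (f q) (G q)) has_derivative (\<lambda>v. 0)) (at x)"
    by (rule has_derivative_transform_within_open[OF has_derivative_const U]) (use hor G_def in simp)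
  have "h' = (\<lambda>v. 0)" using has_derivative_unique[OF hd hz] .
  then have "h' (Y x) = 0" by simp
  moreover have "G x = D (Y x)" unfolding G_def D_def ..
  ultimately have "heis_vcomp (f x) (L (Y x)) = 0"
    unfolding h'_def heis_vcomp_def
    by (simp add: algebra_simps sum_subtractf sum.distrib)
  then show "heis_vcomp (f x) (frechet_derivative (\<lambda>q. frechet_derivative f (at q) (Y q)) (at x) (Y x)) = 0"
    using FL unfolding G_def by simp
qed
theorem proposition5p1:
  fixes U :: "'a::euclidean_space set" and n :: nat
    and th :: "'a \<Rightarrow> 'a \<Rightarrow> real" and J :: "'a \<Rightarrow> 'a \<Rightarrow> 'a" and xi :: "'a \<Rightarrow> 'a"
    and Gam :: "'a \<Rightarrow> 'a \<Rightarrow> 'a \<Rightarrow> 'a" and X :: "nat \<Rightarrow> 'a \<Rightarrow> 'a"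
    and f :: "'a \<Rightarrow> (complex^'m::finite) \<times> real"
  assumes "spc_CR U n th J xi"
    and "tanaka_webster U th J xi Gam"
    and "ortho_frame U n th J X"
    and "Ck 2 U f"
    and "\<forall>x\<in>U. \<forall>v\<in>horiz th x. frechet_derivative f (at x) v \<in> heisH (f x)"
    and "x \<in> U"
  shows "levi_tension n Gam X f x =
           (\<Sum>j\<in>UNIV. sublap n Gam X (\<lambda>q. Re (fst (f q) $ j)) x *\<^sub>R heisX j (f x)
                     + sublap n Gam X (\<lambda>q. Im (fst (f q) $ j)) x *\<^sub>R heisY j (f x))
         \<and> levi_tension n Gam X f x \<in> heisH (f x)
         \<and> heis_g (f x) (levi_tension n Gam X f x) (levi_tension n Gam X f x)
             = 4 * (\<Sum>j\<in>UNIV. (sublap n Gam X (\<lambda>q. Re (fst (f q) $ j)) x)\<^sup>2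
                             + (sublap n Gam X (\<lambda>q. Im (fst (f q) $ j)) x)\<^sup>2)"
proof -
  note x = assms(6)
  have oU: "open U" using assms(1) unfolding spc_CR_def by blast
  have Ck2: "Ck (Suc (Suc 0)) U f" using assms(4) by (simp add: numeral_2_eq_2)
  then have fd: "f differentiable_on U"
    and dfd: "\<forall>v. (\<lambda>q. frechet_derivative f (at q) v) differentiable_on U"
    by auto
  have fdx: "f differentiable at x"
    using fd oU x differentiable_on_eq_differentiable_at by blast
  define D where "D = frechet_derivative f (at x)"
  have Fx: "(f has_derivative D) (at x)" unfolding D_def using fdx frechet_derivative_works by blast
  have DRe: "\<And>j v. frechet_derivative (\<lambda>q. Re (fst (f q) $ j)) (at x) v = Re (fst (D v) $ j)"
  proof -
    fix j v
    have "((\<lambda>q. Re (fst (f q) $ j)) has_derivative (\<lambda>v. Re (fst (D v) $ j))) (at x)"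
      by (intro derivative_intros Fx)
    then show "frechet_derivative (\<lambda>q. Re (fst (f q) $ j)) (at x) v = Re (fst (D v) $ j)"
      by (simp add: frechet_derivative_at[symmetric])
  qed
  have DIm: "\<And>j v. frechet_derivative (\<lambda>q. Im (fst (f q) $ j)) (at x) v = Im (fst (D v) $ j)"
  proof -
    fix j v
    have "((\<lambda>q. Im (fst (f q) $ j)) has_derivative (\<lambda>v. Im (fst (D v) $ j))) (at x)"
      by (intro derivative_intros Fx)
    then show "frechet_derivative (\<lambda>q. Im (fst (f q) $ j)) (at x) v = Im (fst (D v) $ j)"
      by (simp add: frechet_derivative_at[symmetric])
  qed
  define A where "A = (\<lambda>i. frechet_derivative (\<lambda>q. frechet_derivative f (at q) (X i q)) (at x) (X i x))"
  define C where "C = (\<lambda>i. D (cov Gam (X i) (X i) x))"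
  have facts: "heis_vcomp (f x) (A i) = 0 \<and> heis_vcomp (f x) (C i) = 0
     \<and> LC_Gamma heis_g (f x) (D (X i x)) (D (X i x)) = 0
     \<and> (\<forall>j. frechet_derivative (\<lambda>q. frechet_derivative (\<lambda>q. Re (fst (f q) $ j)) (at q) (X i q)) (at x) (X i x)
           = Re (fst (A i) $ j))
     \<and> (\<forall>j. frechet_derivative (\<lambda>q. frechet_derivative (\<lambda>q. Im (fst (f q) $ j)) (at q) (X i q)) (at x) (X i x)
           = Im (fst (A i) $ j))" if i: "i < 2 * n" for i
  proof -
    have Xh: "X i \<in> hfields U th" using assms(3) i unfolding ortho_frame_def by blast
    then have sm: "smooth_on U (X i)" and hz: "\<forall>q\<in>U. th q (X i q) = 0"
      unfolding hfields_def horiz_def by auto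
    from sm have "Ck (Suc 0) U (X i)" unfolding smooth_on_def by blast
    then have Yd: "X i differentiable_on U" by simp
    have hor: "\<forall>q\<in>U. heis_vcomp (f q) (frechet_derivative f (at q) (X i q)) = 0"
      using assms(5) hz heisH_vcomp unfolding horiz_def by blast
    note K = key[OF oU x fd dfd Yd hor]
    have Xv: "X i \<in> vfields U" using sm unfolding vfields_def by simp
    have tw: "frechet_derivative (\<lambda>q. th q (X i q)) (at x) (X i x) = th x (cov Gam (X i) (X i) x)"
      using assms(2) Xv x unfolding tanaka_webster_def by blast
    have "((\<lambda>q. th q (X i q)) has_derivative (\<lambda>v. 0)) (at x)"
      by (rule has_derivative_transform_within_open[OF has_derivative_const oU x]) (use hz in simp)
    then have "frechet_derivative (\<lambda>q. th q (X i q)) (at x) = (\<lambda>v. 0)"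
      by (simp add: frechet_derivative_at[symmetric])
    with tw have "cov Gam (X i) (X i) x \<in> horiz th x" unfolding horiz_def by simp
    then have c0: "heis_vcomp (f x) (C i) = 0"
      unfolding C_def D_def using assms(5) x heisH_vcomp by blast
    have "X i x \<in> horiz th x" using hz x unfolding horiz_def by simp
    then have "heis_vcomp (f x) (D (X i x)) = 0"
      unfolding D_def using assms(5) x heisH_vcomp by blast
    then have lc: "LC_Gamma heis_g (f x) (D (X i x)) (D (X i x)) = 0" by (rule LC_zero)
    show ?thesis using K c0 lc unfolding A_def by auto
  qed
  define T where "T = (\<Sum>i<2*n. A i - C i)"
  have LT: "levi_tension n Gam X f x = T"
    unfolding levi_tension_def T_def
  proof (rule sum.cong[OF refl])
    fix i assume "i \<in> {..<2*n}"
    then have "LC_Gamma heis_g (f x) (D (X i x)) (D (X i x)) = 0" using facts by simp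
    then show "frechet_derivative (\<lambda>q. frechet_derivative f (at q) (X i q)) (at x) (X i x) +
         LC_Gamma heis_g (f x) (frechet_derivative f (at x) (X i x)) (frechet_derivative f (at x) (X i x)) -
         frechet_derivative f (at x) (cov Gam (X i) (X i) x) = A i - C i"
      unfolding A_def C_def D_def by simp
  qed
  have vT: "heis_vcomp (f x) T = 0"
    unfolding T_def linear_sum[OF linear_vcomp] linear_diff[OF linear_vcomp]
    using facts by simp
  have ReT: "Re (fst T $ j) = sublap n Gam X (\<lambda>q. Re (fst (f q) $ j)) x" for j
    unfolding T_def sublap_def
    by (simp add: fst_sum sum_component Re_sum facts DRe C_def)
  have ImT: "Im (fst T $ j) = sublap n Gam X (\<lambda>q. Im (fst (f q) $ j)) x" for j
    unfolding T_def sublap_def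
    by (simp add: fst_sum sum_component Im_sum facts DIm C_def)
  have eq: "T = (\<Sum>j\<in>UNIV. sublap n Gam X (\<lambda>q. Re (fst (f q) $ j)) x *\<^sub>R heisX j (f x)
                     + sublap n Gam X (\<lambda>q. Im (fst (f q) $ j)) x *\<^sub>R heisY j (f x))"
    using vcomp_decomp[OF vT] by (simp add: ReT ImT)
  have mem: "T \<in> heisH (f x)"
    unfolding eq heisH_def
    by (intro span_sum span_add span_scale span_base) auto
  have g: "heis_g (f x) T T = 4 * (\<Sum>j\<in>UNIV. (sublap n Gam X (\<lambda>q. Re (fst (f q) $ j)) x)\<^sup>2
                             + (sublap n Gam X (\<lambda>q. Im (fst (f q) $ j)) x)\<^sup>2)"
    using g_horiz[OF vT] by (simp add: ReT ImT)
  show ?thesis using eq mem g LT by simp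
qed
end
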